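(* There is a polynomial $p$ such that for every $N\geq1$, every $\varepsilon,\eta\in(0,1]$ and every finite nonempty $V\subseteq\mathbb{R}^N$, there is a partition of $V$ into at most $2^{p(1/\varepsilon,1/\eta)}$ clusters such that whenever $u,v$ lie in the same cluster, there are at most $\eta|V|$ points $w\in V$ with $w\in B(u,1)\setminus B(v,1+\varepsilon)$.
   Context: $B(v,r)$ denotes the closed Euclidean ball of radius $r$ centered at $v$. The polynomial $p$ does not depend on $N$ or $V$. *)

theory Defs
  imports "HOL-Analysis.Analysis" "HOL-Library.Disjoint_Sets"
begin

text \<open>Points of R^N are represented as functions nat => real vanishing from index N on.\<close>
definition in_RN :: "nat \<Rightarrow> (nat \<Rightarrow> real) \<Rightarrow> bool" where
  "in_RN N x \<longleftrightarrow> (\<forall>i\<ge>N. x i = 0)"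

definition edistN :: "nat \<Rightarrow> (nat \<Rightarrow> real) \<Rightarrow> (nat \<Rightarrow> real) \<Rightarrow> real" where
  "edistN N x y = sqrt (\<Sum>i<N. (x i - y i)^2)"

definition cballN :: "nat \<Rightarrow> (nat \<Rightarrow> real) \<Rightarrow> real \<Rightarrow> (nat \<Rightarrow> real) set" where
  "cballN N v r = {w. in_RN N w \<and> edistN N v w \<le> r}"

definition poly2 :: "nat \<Rightarrow> (nat \<Rightarrow> nat \<Rightarrow> real) \<Rightarrow> real \<Rightarrow> real \<Rightarrow> real" where
  "poly2 d c x y = (\<Sum>i\<le>d. \<Sum>j\<le>d. c i j * x ^ i * y ^ j)"

end

theory Submission
  imports Defs
begin


definition ip :: "nat \<Rightarrow> (nat \<Rightarrow> real) \<Rightarrow> (nat \<Rightarrow> real) \<Rightarrow> real" where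
  "ip N x y = (\<Sum>i<N. x i * y i)"

definition nrm :: "nat \<Rightarrow> (nat \<Rightarrow> real) \<Rightarrow> real" where
  "nrm N x = ip N x x"

lemma ip_sym: "ip N x y = ip N y x"
  by (simp add: ip_def mult.commute)

lemma nrm_nonneg: "0 \<le> nrm N x"
  by (simp add: nrm_def ip_def sum_nonneg)

lemma cs: "(ip N x y)^2 \<le> nrm N x * nrm N y"
  unfolding nrm_def ip_def using Cauchy_Schwarz_ineq_sum[of x y "{..<N}"]
  by (simp add: power2_eq_square)

lemma cs_abs: "\<bar>ip N x y\<bar> \<le> sqrt (nrm N x * nrm N y)"
  using cs[of N x y] real_le_rsqrt[of "\<bar>ip N x y\<bar>"] by simp

lemma edist_nrm: "edistN N x y = sqrt (nrm N (\<lambda>i. x i - y i))"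
  by (simp add: edistN_def nrm_def ip_def power2_eq_square)

lemma sqrt_le_iff_sq: "0 \<le> r \<Longrightarrow> 0 \<le> a \<Longrightarrow> sqrt a \<le> r \<longleftrightarrow> a \<le> r^2"
  by (metis abs_of_nonneg real_sqrt_abs real_sqrt_le_iff)

lemma edist_le_iff: "0 \<le> r \<Longrightarrow> edistN N x y \<le> r \<longleftrightarrow> nrm N (\<lambda>i. x i - y i) \<le> r^2"
  by (simp add: edist_nrm sqrt_le_iff_sq nrm_nonneg)

lemma nrm_commute: "nrm N (\<lambda>i. x i - y i) = nrm N (\<lambda>i. y i - x i)"
  by (simp add: nrm_def ip_def algebra_simps)

lemma edist_L2: "edistN N x y = L2_set (\<lambda>i. x i - y i) {..<N}"
  by (simp add: edistN_def L2_set_def)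

lemma edist_tri: "edistN N x z \<le> edistN N x y + edistN N y z"
proof -
  have "edistN N x z = L2_set (\<lambda>i. (x i - y i) + (y i - z i)) {..<N}"
    by (simp add: edist_L2)
  also have "\<dots> \<le> edistN N x y + edistN N y z"
    unfolding edist_L2 by (rule L2_set_triangle_ineq)
  finally show ?thesis .
qed

lemma edist_sym: "edistN N x y = edistN N y x"
  by (simp add: edistN_def power2_commute)

lemma edist_self: "edistN N x x = 0"
  by (simp add: edistN_def)

lemma ip_sum_left: "ip N (\<lambda>k. \<Sum>j<D. a j * e j k) y = (\<Sum>j<D. a j * ip N (e j) y)"
  unfolding ip_def
  by (simp add: sum_distrib_left sum_distrib_right mult.assoc sum.swap[of _ "{..<N}"])

lemma ip_diff_left: "ip N (\<lambda>i. x i - y i) z = ip N x z - ip N y z"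
  by (simp add: ip_def left_diff_distrib sum_subtractf)

lemma ip_diff_right: "ip N z (\<lambda>i. x i - y i) = ip N z x - ip N z y"
  by (simp add: ip_def right_diff_distrib sum_subtractf)

lemma ip_scale_left: "ip N (\<lambda>i. x i / s) y = ip N x y / s"
  by (simp add: ip_def sum_divide_distrib)

definition ortho :: "nat \<Rightarrow> (nat \<Rightarrow> nat \<Rightarrow> real) \<Rightarrow> nat \<Rightarrow> bool" where
  "ortho N e D \<longleftrightarrow> (\<forall>i<D. \<forall>j<D. ip N (e i) (e j) = (if i = j then 1 else 0))"

lemma proj_coef:
  assumes "ortho N e D" "k < D"
  shows "ip N (\<lambda>k. \<Sum>j<D. a j * e j k) (e k) = a k"
proof -
  have "ip N (\<lambda>k. \<Sum>j<D. a j * e j k) (e k) = (\<Sum>j<D. a j * ip N (e j) (e k))"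
    by (rule ip_sum_left)
  also have "\<dots> = (\<Sum>j<D. if j = k then a j else 0)"
    using assms by (intro sum.cong) (auto simp: ortho_def)
  also have "\<dots> = a k" using assms by simp
  finally show ?thesis .
qed

lemma bessel:
  fixes x :: "nat \<Rightarrow> real"
  assumes "ortho N e D"
  defines "p \<equiv> (\<lambda>k. \<Sum>j<D. ip N x (e j) * e j k)"
  shows "\<And>k. k < D \<Longrightarrow> ip N (e k) (\<lambda>i. x i - p i) = 0"
    and "nrm N (\<lambda>i. x i - p i) = nrm N x - (\<Sum>j<D. (ip N x (e j))^2)"
    and "(\<Sum>j<D. (ip N x (e j))^2) \<le> nrm N x"
proof -
  show orth: "ip N (e k) (\<lambda>i. x i - p i) = 0" if "k < D" for k
  proof -
    have "ip N (e k) (\<lambda>i. x i - p i) = ip N x (e k) - ip N p (e k)"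
      by (simp add: ip_diff_right ip_sym)
    also have "ip N p (e k) = ip N x (e k)"
      unfolding p_def using proj_coef[OF assms(1) that] .
    finally show ?thesis by simp
  qed
  have pp: "ip N p (\<lambda>i. x i - p i) = 0"
  proof -
    have "ip N p (\<lambda>i. x i - p i) = (\<Sum>j<D. ip N x (e j) * ip N (e j) (\<lambda>i. x i - p i))"
      unfolding p_def by (rule ip_sum_left)
    also have "\<dots> = 0" using orth by simp
    finally show ?thesis .
  qed
  have px: "ip N p x = (\<Sum>j<D. (ip N x (e j))^2)"
    unfolding p_def ip_sum_left by (simp add: ip_sym power2_eq_square)
  have "nrm N (\<lambda>i. x i - p i) = ip N x (\<lambda>i. x i - p i) - ip N p (\<lambda>i. x i - p i)"
    unfolding nrm_def by (rule ip_diff_left)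
  also have "\<dots> = nrm N x - ip N x p"
    using pp by (simp add: ip_diff_right nrm_def)
  also have "ip N x p = (\<Sum>j<D. (ip N x (e j))^2)" using px by (simp add: ip_sym)
  finally show eq: "nrm N (\<lambda>i. x i - p i) = nrm N x - (\<Sum>j<D. (ip N x (e j))^2)" .
  show "(\<Sum>j<D. (ip N x (e j))^2) \<le> nrm N x"
    using eq nrm_nonneg[of N "\<lambda>i. x i - p i"] by simp
qed



lemma basis_exists:
  fixes W :: "'a set" and g :: "'a \<Rightarrow> nat \<Rightarrow> real" and t T :: real
  assumes fin: "finite W" and tpos: "t > 0" and tr: "(\<Sum>w\<in>W. nrm N (g w)) \<le> T"
  shows "\<exists>D e. ortho N e D \<and> real D * t \<le> T \<and>
     (\<forall>y. (\<forall>j<D. ip N (e j) y = 0) \<longrightarrow> (\<Sum>w\<in>W. (ip N (g w) y)^2) \<le> t * nrm N y)"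
proof -
  define En where "En y = (\<Sum>w\<in>W. (ip N (g w) y)^2)" for y
  define S where "S = {D. \<exists>e. ortho N e D \<and> (\<forall>j<D. En (e j) > t)}"
  have bnd: "real D * t \<le> T" if DS: "D \<in> S" for D
  proof -
    obtain e where e: "ortho N e D" "\<forall>j<D. En (e j) > t" using DS S_def by auto
    have "real D * t = (\<Sum>j<D. t)" by simp
    also have "\<dots> \<le> (\<Sum>j<D. En (e j))" using e(2) by (intro sum_mono) (simp add: less_imp_le)
    also have "\<dots> = (\<Sum>w\<in>W. \<Sum>j<D. (ip N (g w) (e j))^2)"
      unfolding En_def by (rule sum.swap)
    also have "\<dots> \<le> (\<Sum>w\<in>W. nrm N (g w))"
      by (intro sum_mono bessel(3)[OF e(1)])
    also have "\<dots> \<le> T" by (rule tr)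
    finally show ?thesis .
  qed
  have "S \<subseteq> {..nat \<lceil>T / t\<rceil>}"
  proof
    fix D assume "D \<in> S"
    from bnd[OF this] tpos have "real D \<le> T / t" by (simp add: pos_le_divide_eq)
    then show "D \<in> {..nat \<lceil>T / t\<rceil>}" by (simp add: le_nat_iff) linarith
  qed
  then have finS: "finite S" by (rule finite_subset) simp
  have "0 \<in> S" unfolding S_def ortho_def by simp
  define D0 where "D0 = Max S"
  have "D0 \<in> S" unfolding D0_def using finS \<open>0 \<in> S\<close> by (intro Max_in) auto
  then obtain e where e: "ortho N e D0" "\<forall>j<D0. En (e j) > t" using S_def by auto
  have maxS: "D \<le> D0" if "D \<in> S" for D unfolding D0_def using finS that by simp
  have main: "En y \<le> t * nrm N y" if perp: "\<forall>j<D0. ip N (e j) y = 0" for y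
  proof (rule ccontr)
    assume "\<not> En y \<le> t * nrm N y"
    then have gt: "En y > t * nrm N y" by simp
    have "nrm N y \<noteq> 0"
    proof
      assume z: "nrm N y = 0"
      have "En y \<le> (\<Sum>w\<in>W. nrm N (g w) * nrm N y)" unfolding En_def by (intro sum_mono cs)
      then show False using gt z by simp
    qed
    then have np: "nrm N y > 0" using nrm_nonneg[of N y] by simp
    define s where "s = sqrt (nrm N y)"
    have sp: "s > 0" and ss: "s * s = nrm N y" using np by (auto simp: s_def)
    define y' where "y' = (\<lambda>i. y i / s)"
    have ipy': "ip N z y' = ip N z y / s" for z unfolding y'_def
      by (subst ip_sym, subst ip_scale_left, simp add: ip_sym)
    have "nrm N y' = nrm N y / (s * s)" unfolding nrm_def
      by (simp add: ipy' ip_scale_left y'_def[symmetric])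
        (simp add: y'_def ip_scale_left)
    then have n1: "nrm N y' = 1" using ss np by simp
    have "En y' = En y / (s * s)" unfolding En_def ipy'
      by (simp add: power_divide sum_divide_distrib power2_eq_square)
    also have "\<dots> > t" using gt ss np by (simp add: pos_less_divide_eq)
    finally have Ey': "En y' > t" .
    define e' where "e' = e(D0 := y')"
    have "ortho N e' (Suc D0)"
      unfolding ortho_def
    proof (intro allI impI)
      fix i j assume i: "i < Suc D0" and j: "j < Suc D0"
      show "ip N (e' i) (e' j) = (if i = j then 1 else 0)"
      proof (cases "i = D0")
        case True
        then show ?thesis
        proof (cases "j = D0")
          case True then show ?thesis using \<open>i = D0\<close> n1 by (simp add: e'_def nrm_def)
        next
          case False then have "j < D0" using j by simp
          then show ?thesis using \<open>i = D0\<close> False perp ipy'[of "e j"] by (simp add: e'_def ip_sym[of N y'])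
        qed
      next
        case False then have "i < D0" using i by simp
        show ?thesis
        proof (cases "j = D0")
          case True then show ?thesis using \<open>i < D0\<close> perp by (simp add: e'_def ipy')
        next
          case False then have "j < D0" using j by simp
          then show ?thesis using \<open>i < D0\<close> e(1) by (simp add: e'_def ortho_def)
        qed
      qed
    qed
    moreover have "\<forall>j<Suc D0. En (e' j) > t"
      using e(2) Ey' by (auto simp: e'_def less_Suc_eq)
    ultimately have "Suc D0 \<in> S" unfolding S_def by blast
    then show False using maxS by fastforce
  qed
  show ?thesis
    using e(1) bnd[OF \<open>D0 \<in> S\<close>] main unfolding En_def by blast
qed



lemma key:
  fixes u v c :: "nat \<Rightarrow> real" and W B :: "(nat \<Rightarrow> real) set"
  assumes ort: "ortho N e D"
    and sub: "\<forall>y. (\<forall>j<D. ip N (e j) y = 0) \<longrightarrow> (\<Sum>w\<in>W. (ip N (\<lambda>k. w k - c k) y)^2) \<le> t * nrm N y"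
    and finW: "finite W" and t0: "t \<ge> 0" and ep: "0 < \<epsilon>" and d0: "\<delta> \<ge> 0"
    and Dd: "3 * real D * \<delta> \<le> \<epsilon> / 4"
    and nn: "\<bar>nrm N (\<lambda>k. v k - c k) - nrm N (\<lambda>k. u k - c k)\<bar> \<le> \<epsilon> / 2"
    and co: "\<forall>j<D. \<bar>ip N (\<lambda>k. v k - c k) (e j) - ip N (\<lambda>k. u k - c k) (e j)\<bar> \<le> \<delta>"
    and z16: "nrm N (\<lambda>k. v k - u k) \<le> 16"
    and BW: "B \<subseteq> W"
    and Bp: "\<forall>w\<in>B. nrm N (\<lambda>k. w k - c k) \<le> 9 \<and> nrm N (\<lambda>k. w k - u k) \<le> 1 \<and> nrm N (\<lambda>k. w k - v k) > (1 + \<epsilon>)^2"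
  shows "real (card B) * (\<epsilon>^2 / 4) \<le> 16 * t"
proof -
  define z where "z = (\<lambda>k. v k - u k)"
  define a where "a j = ip N z (e j)" for j
  define p where "p = (\<lambda>k. \<Sum>j<D. ip N z (e j) * e j k)"
  define zp where "zp = (\<lambda>k. z k - p k)"
  have a_eq: "a j = ip N (\<lambda>k. v k - c k) (e j) - ip N (\<lambda>k. u k - c k) (e j)" for j
    unfolding a_def z_def by (simp add: ip_diff_left)
  have abnd: "\<bar>a j\<bar> \<le> \<delta>" if "j < D" for j using co that a_eq by simp
  have perp: "ip N (e j) zp = 0" if "j < D" for j
    unfolding zp_def p_def using bessel(1)[OF ort that] .
  have nzp: "nrm N zp \<le> nrm N z"
    unfolding zp_def p_def using bessel(2)[OF ort, of z] sum_nonneg[of "{..<D}" "\<lambda>j. (ip N z (e j))^2"]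
    by simp
  have sumW: "(\<Sum>w\<in>W. (ip N (\<lambda>k. w k - c k) zp)^2) \<le> 16 * t"
  proof -
    have "(\<Sum>w\<in>W. (ip N (\<lambda>k. w k - c k) zp)^2) \<le> t * nrm N zp" using sub perp by blast
    also have "\<dots> \<le> t * 16" using nzp z16 t0 unfolding z_def by (intro mult_left_mono) auto
    finally show ?thesis by simp
  qed
  have big: "(ip N (\<lambda>k. w k - c k) zp)^2 \<ge> \<epsilon>^2 / 4" if wB: "w \<in> B" for w
  proof -
    define w' where "w' = (\<lambda>k. w k - c k)"
    have w9: "nrm N w' \<le> 9" and wu: "nrm N (\<lambda>k. w k - u k) \<le> 1"
      and wv: "nrm N (\<lambda>k. w k - v k) > (1 + \<epsilon>)^2" using Bp wB w'_def by auto
    have ipe: "\<bar>ip N w' (e j)\<bar> \<le> 3" if "j < D" for j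
    proof -
      have "nrm N (e j) = 1" using ort that by (simp add: ortho_def nrm_def)
      then have "\<bar>ip N w' (e j)\<bar> \<le> sqrt (nrm N w')" using cs_abs[of N w' "e j"] by simp
      also have "\<dots> \<le> 3" using w9 sqrt_le_iff_sq[of 3 "nrm N w'"] nrm_nonneg[of N w'] by simp
      finally show ?thesis .
    qed
    have wp: "ip N w' p = (\<Sum>j<D. a j * ip N w' (e j))"
      unfolding p_def a_def by (subst ip_sym, subst ip_sum_left) (simp add: ip_sym)
    have "\<bar>ip N w' p\<bar> \<le> (\<Sum>j<D. \<bar>a j * ip N w' (e j)\<bar>)" unfolding wp by (rule sum_abs)
    also have "\<dots> \<le> (\<Sum>j<D. \<delta> * 3)"
    proof (intro sum_mono)
      fix j assume "j \<in> {..<D}"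
      then have "\<bar>a j\<bar> \<le> \<delta>" "\<bar>ip N w' (e j)\<bar> \<le> 3" using abnd ipe by auto
      then show "\<bar>a j * ip N w' (e j)\<bar> \<le> \<delta> * 3"
        by (simp add: abs_mult mult_mono')
    qed
    also have "\<dots> = 3 * real D * \<delta>" by simp
    finally have wpb: "\<bar>ip N w' p\<bar> \<le> \<epsilon> / 4" using Dd by simp
    have ident: "nrm N (\<lambda>k. w k - v k) - nrm N (\<lambda>k. w k - u k)
        = nrm N (\<lambda>k. v k - c k) - nrm N (\<lambda>k. u k - c k) - 2 * ip N w' z"
      unfolding nrm_def ip_def w'_def z_def
      by (simp add: sum_subtractf[symmetric] sum_distrib_left) (intro sum.cong, auto simp: algebra_simps)
    have split: "ip N w' z = ip N w' p + ip N w' zp"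
      unfolding zp_def by (simp add: ip_diff_right)
    have "(1 + \<epsilon>)^2 - 1 < \<epsilon> / 2 - 2 * ip N w' p - 2 * ip N w' zp"
      using ident split wu wv abs_le_D1[OF nn] by linarith
    moreover have "(1 + \<epsilon>)^2 - 1 \<ge> 2 * \<epsilon>" using ep by (simp add: power2_eq_square algebra_simps)
    ultimately have "- ip N w' zp > \<epsilon> / 2" using abs_le_D1[OF wpb] abs_le_D2[OF wpb] by linarith
    then have "(\<epsilon> / 2)^2 < (- ip N w' zp)^2" using ep
      by (intro power_strict_mono) auto
    then show ?thesis unfolding w'_def by (simp add: power_divide)
  qed
  have "real (card B) * (\<epsilon>^2 / 4) = (\<Sum>w\<in>B. \<epsilon>^2 / 4)" by simp
  also have "\<dots> \<le> (\<Sum>w\<in>B. (ip N (\<lambda>k. w k - c k) zp)^2)" using big by (intro sum_mono) auto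
  also have "\<dots> \<le> (\<Sum>w\<in>W. (ip N (\<lambda>k. w k - c k) zp)^2)"
    using BW finW by (intro sum_mono2) auto
  also have "\<dots> \<le> 16 * t" by (rule sumW)
  finally show ?thesis .
qed

lemma part_from_fun:
  assumes "finite V" "f ` V \<subseteq> T" "finite T" "\<forall>u\<in>V. \<forall>v\<in>V. f u = f v \<longrightarrow> Q u v"
  shows "\<exists>P. partition_on V P \<and> finite P \<and> card P \<le> card T \<and> (\<forall>C\<in>P. \<forall>u\<in>C. \<forall>v\<in>C. Q u v)"
proof -
  define P where "P = (\<lambda>t. {x\<in>V. f x = t}) ` (f ` V)"
  have "partition_on V P"
    unfolding P_def by (rule partition_onI) (auto simp: disjnt_def)
  moreover have "finite P" unfolding P_def using assms(1) by simp
  moreover have "card P \<le> card T"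
  proof -
    have "card P \<le> card (f ` V)" unfolding P_def by (rule card_image_le) (use assms(1) in simp)
    also have "\<dots> \<le> card T" using assms(2,3) by (rule card_mono[rotated])
    finally show ?thesis .
  qed
  moreover have "\<forall>C\<in>P. \<forall>u\<in>C. \<forall>v\<in>C. Q u v" unfolding P_def using assms(4) by auto
  ultimately show ?thesis by blast
qed



lemma nat_le_2pow: "real n + 1 \<le> 2 ^ n"
proof -
  have "n + 1 \<le> (2::nat) ^ n" by (induct n) auto
  then have "real (n + 1) \<le> real ((2::nat) ^ n)" by (rule of_nat_mono)
  then show ?thesis by simp
qed

lemma le_2powr: assumes "0 \<le> (x::real)" shows "x \<le> 2 powr x"
proof (cases "x \<le> 1")
  case True
  then show ?thesis using ge_one_powr_ge_zero[of 2 x] assms by simp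
next
  case False
  define n where "n = nat \<lfloor>x\<rfloor>"
  have xn: "x < real n + 1" and nx: "real n \<le> x" using False unfolding n_def by linarith+
  have "x < 2 ^ n" using xn nat_le_2pow[of n] by simp
  also have "\<dots> = 2 powr (real n)" by (simp add: powr_realpow)
  also have "\<dots> \<le> 2 powr x" using nx by simp
  finally show ?thesis by simp
qed

lemma count_bound:
  fixes \<epsilon> \<eta> :: real and h :: nat
  assumes ep: "0 < \<epsilon>" "\<epsilon> \<le> 1" and et: "0 < \<eta>" "\<eta> \<le> 1" and hb: "real h \<le> 1 / \<eta>"
  defines "Dmax \<equiv> nat \<lfloor>576 / (\<eta> * \<epsilon>^2)\<rfloor>"
  defines "\<delta> \<equiv> \<epsilon> / (12 * (real Dmax + 1))"
  defines "K \<equiv> \<lceil>2 / \<delta>\<rceil>"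
  defines "K' \<equiv> nat \<lfloor>8 / \<epsilon>\<rfloor>"
  shows "1 + real h * real (nat (2 * K + 1)) ^ Dmax * real (K' + 1)
          \<le> 2 powr (11000 * (1/\<epsilon>)^3 * (1/\<eta>)^2)"
proof -
  define a where "a = 1 / \<epsilon>"
  define b where "b = 1 / \<eta>"
  have a1: "a \<ge> 1" and b1: "b \<ge> 1" using ep et by (auto simp: a_def b_def)
  have a2: "a^2 \<ge> 1" "a^3 \<ge> 1" using a1 by (simp_all add: one_le_power)
  have a3a: "a^3 \<ge> a"
  proof -
    have "a * 1 \<le> a * a^2" using a1 a2 by (intro mult_left_mono) auto
    then show ?thesis by (simp add: power2_eq_square power3_eq_cube mult.assoc)
  qed
  have P1: "a^3 * b \<ge> a^3" using a1 a2 b1 mult_left_mono[of 1 b "a^3"] by simp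
  have P2: "a^3 * b^2 = (a^3 * b) * b" by (simp add: power2_eq_square)
  have P3: "(a^3 * b) * b \<ge> a^3 * b" using P1 a1 a2 b1 mult_left_mono[of 1 b "a^3*b"] by simp
  have P4: "(a^3 * b) * b \<ge> 1 * b" using P1 a2 b1 by (intro mult_right_mono) auto
  have ab1: "a * b \<ge> a" using a1 b1 mult_left_mono[of 1 b a] by simp
  have ab2: "a * b \<ge> b" using a1 b1 mult_right_mono[of 1 a b] by simp
  have M1: "a^3 * b^2 \<ge> 1" "a^3*b^2 \<ge> b" "a * b \<ge> a" "a*b \<ge> b" "a*b \<ge> 1" "a^3 * b \<ge> 1"
    "a^3*b^2 \<ge> a"
    using P1 P2 P3 P4 ab1 ab2 a1 a2 a3a by linarith+
  have Dr: "real Dmax \<le> 576 * a^2 * b"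
  proof -
    have "576 / (\<eta> * \<epsilon>^2) = 576 * a^2 * b" by (simp add: a_def b_def power2_eq_square field_simps)
    moreover have "576 / (\<eta> * \<epsilon>^2) \<ge> 0" using ep et by simp
    ultimately show ?thesis unfolding Dmax_def by linarith
  qed
  have dpos: "\<delta> > 0" using ep unfolding \<delta>_def by simp
  have twod: "2 / \<delta> = 24 * (real Dmax + 1) * a" unfolding \<delta>_def a_def using ep by (simp add: field_simps)
  have K1: "K \<ge> 1" unfolding K_def using dpos by (simp add: le_ceiling_iff)
  have Kb: "real_of_int K \<le> 24 * (real Dmax + 1) * a + 1" unfolding K_def twod by linarith
  define X where "X = real (nat (2 * K + 1))"
  have X: "X = 2 * real_of_int K + 1" unfolding X_def using K1 by simp
  have "(real Dmax + 1) * a \<le> (576 * a^2 * b + 1) * a" using Dr a1 by (intro mult_right_mono) auto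
  then have "X \<le> 48 * (576 * a^2 * b + 1) * a + 3" using Kb X by linarith
  also have "\<dots> = 27648 * (a^3 * b) + 48 * a + 3" by (simp add: algebra_simps power2_eq_square power3_eq_cube)
  also have "\<dots> \<le> 32768 * (a^3 * b)"
  proof -
    have "a \<le> a^3 * b" using P1 a3a by linarith
    then show ?thesis using M1 by linarith
  qed
  also have "\<dots> \<le> 2 powr 15 * ((2 powr a)^3 * 2 powr b)"
  proof -
    have "a^3 \<le> (2 powr a)^3" using le_2powr[of a] a1 by (intro power_mono) auto
    moreover have "b \<le> 2 powr b" using le_2powr[of b] b1 by simp
    ultimately have "a^3 * b \<le> (2 powr a)^3 * 2 powr b" using a1 b1
      by (intro mult_mono) auto
    moreover have "(2::real) powr 15 = 32768" by (simp add: powr_realpow[of 2 15, simplified])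
    ultimately show ?thesis by simp
  qed
  also have "\<dots> = 2 powr (15 + 3 * a + b)"
  proof -
    have e1: "(2 powr a)^3 = 2 powr (3*a)" by (simp add: powr_power)
    have e2: "(2::real) powr (15 + 3 * a + b) = 2 powr 15 * (2 powr (3*a) * 2 powr b)"
      by (simp only: powr_add mult.assoc)
    show ?thesis by (simp only: e1 e2)
  qed
  also have "\<dots> \<le> 2 powr (19 * a * b)" using M1 by simp
  finally have Xb: "X \<le> 2 powr (19 * a * b)" .
  have "X ^ Dmax \<le> (2 powr (19 * a * b)) ^ Dmax"
    using Xb X K1 by (intro power_mono) auto
  also have "\<dots> = 2 powr (real Dmax * (19 * a * b))" by (simp add: powr_power)
  also have "\<dots> \<le> 2 powr (576 * a^2 * b * (19 * a * b))"
    using Dr a1 b1 by (simp add: mult_right_mono mult.commute mult.left_commute)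
  also have "\<dots> = 2 powr (10944 * (a^3 * b^2))"
    by (simp add: power2_eq_square power3_eq_cube algebra_simps)
  finally have XD: "X ^ Dmax \<le> 2 powr (10944 * (a^3 * b^2))" .
  have hB: "real h \<le> 2 powr (a^3 * b^2)"
  proof -
    have "real h \<le> b" using hb b_def by simp
    also have "\<dots> \<le> 2 powr b" using le_2powr[of b] b1 by simp
    also have "\<dots> \<le> 2 powr (a^3 * b^2)" using M1 by simp
    finally show ?thesis .
  qed
  have KB: "real (K' + 1) \<le> 2 powr (5 * (a^3 * b^2))"
  proof -
    have "real K' \<le> 8 * a" unfolding K'_def a_def using ep by (simp add: field_simps)
    then have "real (K' + 1) \<le> 16 * a" using a1 by simp
    also have "\<dots> \<le> 2 powr 4 * 2 powr a"
    proof -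
      have "(2::real) powr 4 = 16" by (simp add: powr_realpow[of 2 4, simplified])
      then show ?thesis using le_2powr[of a] a1 by simp
    qed
    also have "\<dots> = 2 powr (4 + a)" by (simp add: powr_add)
    also have "\<dots> \<le> 2 powr (5 * (a^3 * b^2))" using M1 by simp
    finally show ?thesis .
  qed
  have "real h * X ^ Dmax * real (K' + 1)
      \<le> 2 powr (a^3 * b^2) * 2 powr (10944 * (a^3 * b^2)) * 2 powr (5 * (a^3 * b^2))"
    using hB XD KB X_def by (intro mult_mono) auto
  also have "\<dots> = 2 powr (10950 * (a^3 * b^2))" by (simp add: powr_add[symmetric])
  finally have P: "real h * X ^ Dmax * real (K' + 1) \<le> 2 powr (10950 * (a^3 * b^2))" .
  have "1 + real h * X ^ Dmax * real (K' + 1) \<le> 2 powr (10950 * (a^3 * b^2)) + 2 powr (10950 * (a^3 * b^2))"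
    using P ge_one_powr_ge_zero[of 2 "10950 * (a^3 * b^2)"] M1 by simp
  also have "\<dots> = 2 powr (1 + 10950 * (a^3 * b^2))" by (simp add: powr_add)
  also have "\<dots> \<le> 2 powr (11000 * (a^3 * b^2))" using M1 by simp
  finally show ?thesis unfolding X_def a_def b_def by (simp add: mult.assoc)
qed



lemma floor_close: fixes x y d :: real assumes "\<lfloor>x / d\<rfloor> = \<lfloor>y / d\<rfloor>" "d > 0" shows "\<bar>x - y\<bar> \<le> d"
proof -
  have "\<bar>x / d - y / d\<bar> < 1" unfolding abs_less_iff
    using assms(1) of_int_floor_le[of "x/d"] of_int_floor_le[of "y/d"]
      real_of_int_floor_add_one_gt[of "x/d"] real_of_int_floor_add_one_gt[of "y/d"] by linarith
  then have "\<bar>x - y\<bar> / d < 1" using assms(2) by (simp add: diff_divide_distrib[symmetric])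
  then show ?thesis using assms(2) by (simp add: divide_less_eq)
qed

lemma main:
  fixes N :: nat and \<epsilon> \<eta> :: real and V :: "(nat \<Rightarrow> real) set"
  assumes ep: "0 < \<epsilon>" "\<epsilon> \<le> 1" and et: "0 < \<eta>" "\<eta> \<le> 1"
    and finV: "finite V" and neV: "V \<noteq> {}" and inV: "\<forall>x\<in>V. in_RN N x"
  shows "\<exists>P. partition_on V P \<and> finite P \<and>
         real (card P) \<le> 2 powr (11000 * (1/\<epsilon>)^3 * (1/\<eta>)^2) \<and>
         (\<forall>C\<in>P. \<forall>u\<in>C. \<forall>v\<in>C.
            real (card {w\<in>V. w \<in> cballN N u 1 - cballN N v (1 + \<epsilon>)}) \<le> \<eta> * real (card V))"
proof -
  define n where "n = real (card V)"
  have npos: "n > 0" using finV neV by (simp add: n_def card_gt_0_iff)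
  define Q where "Q u v \<longleftrightarrow> real (card {w\<in>V. w \<in> cballN N u 1 - cballN N v (1 + \<epsilon>)}) \<le> \<eta> * n" for u v
  define Bad where "Bad u v = {w\<in>V. w \<in> cballN N u 1 - cballN N v (1 + \<epsilon>)}" for u v
  define Bl where "Bl u = {w\<in>V. edistN N u w \<le> 1}" for u
  define Lt where "Lt = {u\<in>V. real (card (Bl u)) \<le> \<eta> * n}"
  define Hv where "Hv = V - Lt"
  have badBl: "Bad u v \<subseteq> Bl u" for u v unfolding Bad_def Bl_def cballN_def by auto
  have finBl: "finite (Bl u)" for u unfolding Bl_def using finV by simp
  have lightQ: "Q u v" if "u \<in> Lt" for u v
  proof -
    have "card (Bad u v) \<le> card (Bl u)" using badBl finBl by (intro card_mono) auto
    then show ?thesis using that unfolding Q_def Lt_def Bad_def[symmetric] by auto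
  qed
  define F where "F = {H. H \<subseteq> Hv \<and> (\<forall>x\<in>H. \<forall>y\<in>H. x \<noteq> y \<longrightarrow> edistN N x y > 2)}"
  have finHv: "finite Hv" unfolding Hv_def using finV by simp
  have "F \<subseteq> Pow Hv" unfolding F_def by blast
  then have finF: "finite F" using finHv by (simp add: finite_subset)
  have "{} \<in> F" unfolding F_def by simp
  define m where "m = Max (card ` F)"
  have "m \<in> card ` F" unfolding m_def using finF \<open>{} \<in> F\<close> by (intro Max_in) auto
  then obtain H where HF: "H \<in> F" and cH: "card H = m" by auto
  have maxF: "card H' \<le> card H" if "H' \<in> F" for H' unfolding cH m_def using finF that by simp
  have HHv: "H \<subseteq> Hv" and Hsep: "\<forall>x\<in>H. \<forall>y\<in>H. x \<noteq> y \<longrightarrow> edistN N x y > 2" using HF F_def by auto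
  have finH: "finite H" using HHv finHv finite_subset by blast
  have cover: "\<exists>c\<in>H. edistN N u c \<le> 2" if uH: "u \<in> Hv" for u
  proof (rule ccontr)
    assume "\<not> ?thesis"
    then have far: "\<forall>c\<in>H. edistN N u c > 2" by auto
    then have "u \<notin> H" using edist_self[of N u] by force
    have far2: "\<forall>c\<in>H. edistN N c u > 2" using far by (simp add: edist_sym)
    have "insert u H \<subseteq> Hv" using HHv uH by blast
    moreover have "\<forall>x\<in>insert u H. \<forall>y\<in>insert u H. x \<noteq> y \<longrightarrow> edistN N x y > 2"
    proof (intro ballI impI)
      fix x y assume "x \<in> insert u H" "y \<in> insert u H" "x \<noteq> y"
      then show "edistN N x y > 2" using Hsep far far2 by (cases "x = u"; cases "y = u") auto
    qed
    ultimately have "insert u H \<in> F" unfolding F_def by blast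
    then have "card (insert u H) \<le> card H" by (rule maxF)
    then show False using \<open>u \<notin> H\<close> finH by simp
  qed
  have cardH: "real (card H) \<le> 1 / \<eta>"
  proof -
    have disj: "\<forall>i\<in>H. \<forall>j\<in>H. i \<noteq> j \<longrightarrow> Bl i \<inter> Bl j = {}"
    proof (intro ballI impI)
      fix i j assume "i \<in> H" "j \<in> H" "i \<noteq> j"
      then have "edistN N i j > 2" using Hsep by auto
      show "Bl i \<inter> Bl j = {}"
      proof (rule ccontr)
        assume "Bl i \<inter> Bl j \<noteq> {}"
        then obtain w where "edistN N i w \<le> 1" "edistN N j w \<le> 1" unfolding Bl_def by auto
        then have "edistN N i j \<le> 2" using edist_tri[of N i j w] edist_sym[of N j w] by linarith
        then show False using \<open>edistN N i j > 2\<close> by simp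
      qed
    qed
    have "card (\<Union>(Bl ` H)) = (\<Sum>i\<in>H. card (Bl i))"
      using finH finBl disj by (intro card_UN_disjoint) auto
    moreover have "card (\<Union>(Bl ` H)) \<le> card V" using finV by (intro card_mono) (auto simp: Bl_def)
    ultimately have s: "(\<Sum>i\<in>H. real (card (Bl i))) \<le> n" unfolding n_def
      by (metis of_nat_le_iff of_nat_sum)
    have "(\<Sum>i\<in>H. \<eta> * n) \<le> (\<Sum>i\<in>H. real (card (Bl i)))"
      using HHv by (intro sum_mono) (auto simp: Hv_def Lt_def)
    then have "real (card H) * (\<eta> * n) \<le> n" using s by simp
    then have "(real (card H) * \<eta>) * n \<le> 1 * n" by (simp add: mult.assoc)
    then have "real (card H) * \<eta> \<le> 1" using mult_le_cancel_right_pos[OF npos] by blast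
    then show ?thesis using et by (simp add: pos_le_divide_eq)
  qed
  define \<theta> where "\<theta> = \<eta> * \<epsilon>^2 / 64"
  have thp: "\<theta> > 0" using ep et by (simp add: \<theta>_def)
  define Wc where "Wc c = {w\<in>V. edistN N c w \<le> 3}" for c
  have "\<forall>c\<in>H. \<exists>D e. ortho N e D \<and> real D * (\<theta> * n) \<le> 9 * n \<and>
     (\<forall>y. (\<forall>j<D. ip N (e j) y = 0) \<longrightarrow> (\<Sum>w\<in>Wc c. (ip N (\<lambda>k. w k - c k) y)^2) \<le> (\<theta> * n) * nrm N y)"
  proof
    fix c assume "c \<in> H"
    have finW: "finite (Wc c)" unfolding Wc_def using finV by simp
    have "(\<Sum>w\<in>Wc c. nrm N (\<lambda>k. w k - c k)) \<le> (\<Sum>w\<in>Wc c. 9)"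
    proof (intro sum_mono)
      fix w assume "w \<in> Wc c"
      then have "edistN N c w \<le> 3" unfolding Wc_def by simp
      then have "nrm N (\<lambda>k. c k - w k) \<le> 9" using edist_le_iff[of 3 N c w] by simp
      then show "nrm N (\<lambda>k. w k - c k) \<le> 9" using nrm_commute by metis
    qed
    also have "\<dots> = 9 * real (card (Wc c))" by simp
    also have "\<dots> \<le> 9 * n" unfolding n_def using finV by (simp add: Wc_def card_mono)
    finally have tr: "(\<Sum>w\<in>Wc c. nrm N (\<lambda>k. w k - c k)) \<le> 9 * n" .
    show "\<exists>D e. ortho N e D \<and> real D * (\<theta> * n) \<le> 9 * n \<and>
     (\<forall>y. (\<forall>j<D. ip N (e j) y = 0) \<longrightarrow> (\<Sum>w\<in>Wc c. (ip N (\<lambda>k. w k - c k) y)^2) \<le> (\<theta> * n) * nrm N y)"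
      using thp npos by (intro basis_exists[OF finW _ tr]) simp
  qed
  then have "\<forall>c\<in>H. \<exists>De. ortho N (snd De) (fst De) \<and> real (fst De) * (\<theta> * n) \<le> 9 * n \<and>
     (\<forall>y. (\<forall>j<fst De. ip N (snd De j) y = 0) \<longrightarrow> (\<Sum>w\<in>Wc c. (ip N (\<lambda>k. w k - c k) y)^2) \<le> (\<theta> * n) * nrm N y)"
    by simp
  then obtain DE where DE: "\<forall>c\<in>H. ortho N (snd (DE c)) (fst (DE c)) \<and> real (fst (DE c)) * (\<theta> * n) \<le> 9 * n \<and>
     (\<forall>y. (\<forall>j<fst (DE c). ip N (snd (DE c) j) y = 0) \<longrightarrow> (\<Sum>w\<in>Wc c. (ip N (\<lambda>k. w k - c k) y)^2) \<le> (\<theta> * n) * nrm N y)"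
    by (rule bchoice[THEN exE]) blast
  define Df where "Df c = fst (DE c)" for c
  define ef where "ef c = snd (DE c)" for c
  have Def: "\<forall>c\<in>H. ortho N (ef c) (Df c) \<and> real (Df c) * (\<theta> * n) \<le> 9 * n \<and>
     (\<forall>y. (\<forall>j<Df c. ip N (ef c j) y = 0) \<longrightarrow> (\<Sum>w\<in>Wc c. (ip N (\<lambda>k. w k - c k) y)^2) \<le> (\<theta> * n) * nrm N y)"
    using DE unfolding Df_def ef_def .
  define Dmax where "Dmax = nat \<lfloor>576 / (\<eta> * \<epsilon>^2)\<rfloor>"
  define \<delta> where "\<delta> = \<epsilon> / (12 * (real Dmax + 1))"
  define K where "K = \<lceil>2 / \<delta>\<rceil>"
  define K' where "K' = nat \<lfloor>8 / \<epsilon>\<rfloor>"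
  have dpos: "\<delta> > 0" unfolding \<delta>_def using ep by simp
  have t2: "-1 < 2 / \<delta>" using divide_pos_pos[of 2 \<delta>] dpos by linarith
  have K0: "K \<ge> 0" unfolding K_def by (rule zero_le_ceiling[THEN iffD2, OF t2])
  have DfD: "Df c \<le> Dmax" if "c \<in> H" for c
  proof -
    have "real (Df c) * (\<theta> * n) \<le> 9 * n" using Def that by blast
    then have "(real (Df c) * \<theta>) * n \<le> 9 * n" by (simp add: mult.assoc)
    then have "real (Df c) * \<theta> \<le> 9" using mult_le_cancel_right_pos[OF npos] by blast
    then have "real (Df c) \<le> 9 / \<theta>" using thp by (simp add: pos_le_divide_eq)
    also have "9 / \<theta> = 576 / (\<eta> * \<epsilon>^2)" unfolding \<theta>_def by simp
    finally show ?thesis unfolding Dmax_def by linarith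
  qed
  define hub where "hub u = (SOME c. c \<in> H \<and> edistN N u c \<le> 2)" for u
  have hubH: "hub u \<in> H" "edistN N u (hub u) \<le> 2" if "u \<in> Hv" for u
  proof -
    from cover[OF that] have ex: "\<exists>c. c \<in> H \<and> edistN N u c \<le> 2" by blast
    show "hub u \<in> H" "edistN N u (hub u) \<le> 2" using someI_ex[OF ex] unfolding hub_def by auto
  qed
  define coef where "coef u = (\<lambda>i. if i < Dmax then (if i < Df (hub u)
      then \<lfloor>ip N (\<lambda>k. u k - hub u k) (ef (hub u) i) / \<delta>\<rfloor> else 0) else undefined)" for u
  define nidx where "nidx u = nat \<lfloor>nrm N (\<lambda>k. u k - hub u k) / (\<epsilon> / 2)\<rfloor>" for u
  define \<tau> where "\<tau> u = (if u \<in> Lt then None else Some (hub u, coef u, nidx u))" for u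
  define T where "T = insert None (Some ` (H \<times> (PiE {..<Dmax} (\<lambda>_. {-K..K})) \<times> {..K'}))"
  have finT: "finite T" unfolding T_def using finH by (simp add: finite_PiE)
  have nrm4: "nrm N (\<lambda>k. u k - hub u k) \<le> 4" if "u \<in> Hv" for u
    using hubH(2)[OF that] edist_le_iff[of 2 N u "hub u"] by simp
  have tauT: "\<tau> ` V \<subseteq> T"
  proof
    fix x assume "x \<in> \<tau> ` V"
    then obtain u where uV: "u \<in> V" and x: "x = \<tau> u" by auto
    show "x \<in> T"
    proof (cases "u \<in> Lt")
      case True then show ?thesis using x by (simp add: \<tau>_def T_def)
    next
      case False
      then have uH: "u \<in> Hv" using uV Hv_def by simp
      define c where "c = hub u"
      have cH: "c \<in> H" using hubH uH c_def by simp
      have coefin: "coef u \<in> PiE {..<Dmax} (\<lambda>_. {-K..K})"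
      proof (rule PiE_I)
        fix i assume i: "i \<in> {..<Dmax}"
        show "coef u i \<in> {-K..K}"
        proof (cases "i < Df c")
          case False then show ?thesis using i K0 unfolding coef_def c_def[symmetric] by simp
        next
          case True
          define xx where "xx = ip N (\<lambda>k. u k - c k) (ef c i)"
          have "nrm N (ef c i) = 1" using Def cH True by (simp add: ortho_def nrm_def)
          then have "\<bar>xx\<bar> \<le> sqrt (nrm N (\<lambda>k. u k - c k))" unfolding xx_def using cs_abs[of N _ "ef c i"] by simp
          also have "\<dots> \<le> 2" using nrm4[OF uH] sqrt_le_iff_sq[of 2] nrm_nonneg c_def by simp
          finally have x2: "\<bar>xx\<bar> \<le> 2" .
          have "xx / \<delta> \<le> 2 / \<delta>" using abs_le_D1[OF x2] dpos by (intro divide_right_mono) auto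
          moreover have "(-2) / \<delta> \<le> xx / \<delta>" using abs_le_D2[OF x2] dpos by (intro divide_right_mono) auto
          ultimately have "xx / \<delta> \<le> 2 / \<delta>" "- (2 / \<delta>) \<le> xx / \<delta>" by simp_all
          then have "\<lfloor>xx / \<delta>\<rfloor> \<le> K" "- K \<le> \<lfloor>xx / \<delta>\<rfloor>" unfolding K_def by linarith+
          then show ?thesis using i True unfolding coef_def c_def[symmetric] xx_def by simp
        qed
      next
        fix i assume "i \<notin> {..<Dmax}" then show "coef u i = undefined" unfolding coef_def by simp
      qed
      have "nidx u \<le> K'"
      proof -
        have "nrm N (\<lambda>k. u k - hub u k) / (\<epsilon> / 2) \<le> 4 / (\<epsilon> / 2)"
          using nrm4[OF uH] ep by (intro divide_right_mono) auto
        also have "\<dots> = 8 / \<epsilon>" by simp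
        finally show ?thesis unfolding nidx_def K'_def by (intro nat_mono floor_mono)
      qed
      then show ?thesis using x False cH coefin unfolding \<tau>_def T_def c_def by simp
    qed
  qed
  have goodQ: "Q u v" if uV: "u \<in> V" and vV: "v \<in> V" and eq: "\<tau> u = \<tau> v" for u v
  proof (cases "u \<in> Lt")
    case True then show ?thesis by (rule lightQ)
  next
    case False
    then have vL: "v \<notin> Lt" using eq unfolding \<tau>_def by (auto split: if_splits)
    have uH: "u \<in> Hv" and vH: "v \<in> Hv" using False vL uV vV Hv_def by auto
    have heq: "hub u = hub v" and ceq: "coef u = coef v" and neq: "nidx u = nidx v"
      using eq False vL unfolding \<tau>_def by auto
    define c where "c = hub u"
    have cH: "c \<in> H" using hubH uH c_def by simp
    have uc: "edistN N u c \<le> 2" using hubH(2)[OF uH] c_def by simp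
    have vc: "edistN N v c \<le> 2" using hubH(2)[OF vH] c_def heq by simp
    have ort: "ortho N (ef c) (Df c)" and sub: "\<forall>y. (\<forall>j<Df c. ip N (ef c j) y = 0) \<longrightarrow>
       (\<Sum>w\<in>Wc c. (ip N (\<lambda>k. w k - c k) y)^2) \<le> (\<theta> * n) * nrm N y" using Def cH by auto
    have finW: "finite (Wc c)" unfolding Wc_def using finV by simp
    have Dd: "3 * real (Df c) * \<delta> \<le> \<epsilon> / 4"
    proof -
      have "real (Df c) \<le> real Dmax + 1" using DfD[OF cH] by simp
      then have "3 * real (Df c) * \<delta> \<le> 3 * (real Dmax + 1) * \<delta>" using dpos by simp
      also have "\<dots> = \<epsilon> / 4" unfolding \<delta>_def by (simp add: field_simps)
      finally show ?thesis .
    qed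
    have nn: "\<bar>nrm N (\<lambda>k. v k - c k) - nrm N (\<lambda>k. u k - c k)\<bar> \<le> \<epsilon> / 2"
    proof -
      have "\<lfloor>nrm N (\<lambda>k. v k - c k) / (\<epsilon> / 2)\<rfloor> = \<lfloor>nrm N (\<lambda>k. u k - c k) / (\<epsilon> / 2)\<rfloor>"
        using neq heq unfolding nidx_def c_def
        by (subst (asm) eq_nat_nat_iff) (simp_all add: nrm_nonneg ep(1) less_imp_le)
      from floor_close[OF this] show ?thesis using ep by simp
    qed
    have co: "\<forall>j<Df c. \<bar>ip N (\<lambda>k. v k - c k) (ef c j) - ip N (\<lambda>k. u k - c k) (ef c j)\<bar> \<le> \<delta>"
    proof (intro allI impI)
      fix j assume j: "j < Df c"
      then have "j < Dmax" using DfD[OF cH] by simp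
      then have "\<lfloor>ip N (\<lambda>k. v k - c k) (ef c j) / \<delta>\<rfloor> = \<lfloor>ip N (\<lambda>k. u k - c k) (ef c j) / \<delta>\<rfloor>"
        using fun_cong[OF ceq, of j] j heq unfolding coef_def c_def by simp
      from floor_close[OF this dpos]
      show "\<bar>ip N (\<lambda>k. v k - c k) (ef c j) - ip N (\<lambda>k. u k - c k) (ef c j)\<bar> \<le> \<delta>" .
    qed
    have z16: "nrm N (\<lambda>k. v k - u k) \<le> 16"
    proof -
      have "edistN N v u \<le> 4" using edist_tri[of N v u c] uc vc edist_sym[of N u c] by linarith
      then show ?thesis using edist_le_iff[of 4 N v u] by simp
    qed
    have BW: "Bad u v \<subseteq> Wc c"
    proof
      fix w assume "w \<in> Bad u v"
      then have "w \<in> V" "edistN N u w \<le> 1" unfolding Bad_def cballN_def by auto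
      then show "w \<in> Wc c" unfolding Wc_def using edist_tri[of N c w u] uc edist_sym[of N u c] \<open>w \<in> V\<close> \<open>edistN N u w \<le> 1\<close> by simp
    qed
    have Bp: "\<forall>w\<in>Bad u v. nrm N (\<lambda>k. w k - c k) \<le> 9 \<and> nrm N (\<lambda>k. w k - u k) \<le> 1 \<and>
         nrm N (\<lambda>k. w k - v k) > (1 + \<epsilon>)^2"
    proof
      fix w assume wB: "w \<in> Bad u v"
      then have wV: "w \<in> V" and wu: "edistN N u w \<le> 1" and wv: "\<not> edistN N v w \<le> 1 + \<epsilon>"
        unfolding Bad_def cballN_def using inV by auto
      have "edistN N c w \<le> 3" using BW wB unfolding Wc_def by auto
      then have "nrm N (\<lambda>k. c k - w k) \<le> 9" using edist_le_iff[of 3 N c w] by simp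
      moreover have "nrm N (\<lambda>k. u k - w k) \<le> 1" using wu edist_le_iff[of 1 N u w] by simp
      moreover have "\<not> nrm N (\<lambda>k. v k - w k) \<le> (1 + \<epsilon>)^2" using wv edist_le_iff[of "1+\<epsilon>" N v w] ep by simp
      ultimately show "nrm N (\<lambda>k. w k - c k) \<le> 9 \<and> nrm N (\<lambda>k. w k - u k) \<le> 1 \<and>
         nrm N (\<lambda>k. w k - v k) > (1 + \<epsilon>)^2" using nrm_commute by (metis not_le)
    qed
    have "real (card (Bad u v)) * (\<epsilon>^2 / 4) \<le> 16 * (\<theta> * n)"
      by (rule key[OF ort sub finW _ ep(1) _ Dd nn co z16 BW Bp]) (use thp npos dpos in auto)
    also have "\<dots> = (\<eta> * n) * (\<epsilon>^2 / 4)" unfolding \<theta>_def by simp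
    finally have "real (card (Bad u v)) \<le> \<eta> * n" using ep by simp
    then show ?thesis unfolding Q_def Bad_def by simp
  qed
  obtain P where P: "partition_on V P" "finite P" "card P \<le> card T" "\<forall>C\<in>P. \<forall>u\<in>C. \<forall>v\<in>C. Q u v"
    using part_from_fun[OF finV tauT finT, of Q] goodQ by blast
  have "real (card T) \<le> 1 + real (card H) * real (nat (2 * K + 1)) ^ Dmax * real (K' + 1)"
  proof -
    have "card T \<le> Suc (card (Some ` (H \<times> (PiE {..<Dmax} (\<lambda>_. {-K..K})) \<times> {..K'})))"
      unfolding T_def by (rule card_insert_le_m1) simp_all
    also have "\<dots> \<le> Suc (card (H \<times> (PiE {..<Dmax} (\<lambda>_. {-K..K})) \<times> {..K'}))"
      by (simp add: card_image)
    also have "\<dots> = Suc (card H * (nat (2 * K + 1) ^ Dmax * (K' + 1)))"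
      by (simp add: card_cartesian_product card_PiE)
    finally have "card T \<le> Suc (card H * (nat (2 * K + 1) ^ Dmax * (K' + 1)))" .
    then have "real (card T) \<le> real (Suc (card H * (nat (2 * K + 1) ^ Dmax * (K' + 1))))"
      by (simp only: of_nat_le_iff)
    also have "\<dots> = 1 + real (card H) * real (nat (2 * K + 1)) ^ Dmax * real (K' + 1)"
      by (simp only: of_nat_Suc of_nat_mult of_nat_power mult.assoc add.commute)
    finally show ?thesis .
  qed
  also have "\<dots> \<le> 2 powr (11000 * (1/\<epsilon>)^3 * (1/\<eta>)^2)"
    unfolding Dmax_def K_def \<delta>_def K'_def by (rule count_bound[OF ep et cardH])
  finally have "real (card P) \<le> 2 powr (11000 * (1/\<epsilon>)^3 * (1/\<eta>)^2)"
    using P(3) by (meson of_nat_le_iff order_trans)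
  then show ?thesis using P unfolding Q_def n_def by blast
qed



theorem lemmaA2:
  shows "\<exists>d c. \<forall>N::nat. \<forall>\<epsilon>::real. \<forall>\<eta>::real. \<forall>V.
    N \<ge> 1 \<longrightarrow> 0 < \<epsilon> \<longrightarrow> \<epsilon> \<le> 1 \<longrightarrow> 0 < \<eta> \<longrightarrow> \<eta> \<le> 1 \<longrightarrow>
    finite V \<longrightarrow> V \<noteq> {} \<longrightarrow> (\<forall>x\<in>V. in_RN N x) \<longrightarrow>
    (\<exists>P. partition_on V P \<and> finite P \<and>
         real (card P) \<le> 2 powr (poly2 d c (1/\<epsilon>) (1/\<eta>)) \<and>
         (\<forall>C\<in>P. \<forall>u\<in>C. \<forall>v\<in>C.
            real (card {w\<in>V. w \<in> cballN N u 1 - cballN N v (1 + \<epsilon>)}) \<le> \<eta> * real (card V)))"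
proof -
  define cc where "cc = (\<lambda>(i::nat) (j::nat). if i = 3 \<and> j = 2 then (11000::real) else 0)"
  have pe: "poly2 3 cc x y = 11000 * x^3 * y^2" for x y
  proof -
    have "poly2 3 cc x y = (\<Sum>i\<le>(3::nat). \<Sum>j\<le>(3::nat). if i = 3 then (if j = 2 then 11000 * x^3 * y^2 else 0) else (0::real))"
      unfolding poly2_def cc_def by (intro sum.cong refl) auto
    also have "\<dots> = (\<Sum>i\<le>(3::nat). if i = 3 then (\<Sum>j\<le>(3::nat). if j = 2 then 11000 * x^3 * y^2 else 0) else (0::real))"
      by (intro sum.cong refl) auto
    also have "\<dots> = 11000 * x^3 * y^2"
      by (simp only: sum.delta finite_atMost atMost_iff) simp
    finally show ?thesis .
  qed
  show ?thesis
  proof (rule exI[of _ 3], rule exI[of _ cc], intro allI impI)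
    fix N :: nat and \<epsilon> \<eta> :: real and V :: "(nat \<Rightarrow> real) set"
    assume "1 \<le> N" "0 < \<epsilon>" "\<epsilon> \<le> 1" "0 < \<eta>" "\<eta> \<le> 1" "finite V" "V \<noteq> {}" "\<forall>x\<in>V. in_RN N x"
    then show "\<exists>P. partition_on V P \<and> finite P \<and>
         real (card P) \<le> 2 powr (poly2 3 cc (1/\<epsilon>) (1/\<eta>)) \<and>
         (\<forall>C\<in>P. \<forall>u\<in>C. \<forall>v\<in>C.
            real (card {w\<in>V. w \<in> cballN N u 1 - cballN N v (1 + \<epsilon>)}) \<le> \<eta> * real (card V))"
      unfolding pe by (intro main) auto
  qed
qed

end
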